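(* The set $V:=\{\alpha\in\ell^\infty_w:\ G_{\tilde\psi,\psi}\alpha=\alpha\}$ is a closed subspace of $\ell^\infty_w$. Consequently, $(\mathcal H^\infty_w,\|\cdot\|_{\mathcal H^\infty_w})$ is a Banach space.
   Context: Standing setting. $\mathcal H$ is a separable complex Hilbert space with inner product $\langle\cdot,\cdot\rangle$, linear in the first and conjugate-linear in the second argument. $X$ is a countable index set. A weight is a map $w:X\to(0,\infty)$; $\ell^\infty_w$ is the Banach space of sequences $\alpha=(\alpha_k)_{k\in X}$ with $\|\alpha\|_{\ell^\infty_w}:=\sup_{k\in X}|\alpha_k|w(k)<\infty$. $\psi=(\psi_k)_{k\in X}$ is a frame for $\mathcal H$ and $\tilde\psi=(\tilde\psi_k)_{k\in X}$ is a dual frame, i.e. $f=\sum_{k}\langle f,\tilde\psi_k\rangle\psi_k=\sum_k\langle f,\psi_k\rangle\tilde\psi_k$ for all $f\in\mathcal H$ (unconditional convergence in $\mathcal H$). The cross Gram matrix $G_{\tilde\psi,\psi}$ has entries $(G_{\tilde\psi,\psi})_{k,l}=\langle\psi_l,\tilde\psi_k\rangle$ and acts by $(G_{\tilde\psi,\psi}\alpha)_k=\sum_{l\in X}\langle\psi_l,\tilde\psi_k\rangle\alpha_l$; it is assumed to define a bounded operator on $\ell^\infty_w$, meaning these series converge absolutely for every $\alpha\in\ell^\infty_w$ and $G_{\tilde\psi,\psi}:\ell^\infty_w\to\ell^\infty_w$ is bounded (equivalently $\|G_{\tilde\psi,\psi}\|_{\mathcal B(\ell^\infty_w)}=\sup_{k}\sum_{l}|\langle\psi_l,\tilde\psi_k\rangle|\,w(k)/w(l)<\infty$).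 Let $\mathcal H^{00}:=\operatorname{span}\{\tilde\psi_k:k\in X\}$ (finite linear combinations), a dense subspace of $\mathcal H$. Equip $\mathcal H$ with the locally convex topology $\sigma(\mathcal H,\mathcal H^{00})$ generated by the seminorms $f\mapsto|\langle f,v\rangle|$, $v\in\mathcal H^{00}$ (Hausdorff and metrizable). Let $\overline{\mathcal H}$ be the completion of $\mathcal H$ in this topology, with $\mathcal H\subseteq\overline{\mathcal H}$, and for each $v\in\mathcal H^{00}$ let $f\mapsto\langle f,v\rangle_{\overline{\mathcal H},\mathcal H^{00}}$ be the unique continuous linear extension of $f\mapsto\langle f,v\rangle$ to $\overline{\mathcal H}$. Define $\mathcal H^\infty_w$ as the set of all $f\in\overline{\mathcal H}$ for which there is a sequence $(f_n)_{n\ge1}\subseteq\mathcal H$ converging to $f$ in $\sigma(\overline{\mathcal H},\mathcal H^{00})$ (i.e. $\langle f_n,v\rangle\to\langle f,v\rangle_{\overline{\mathcal H},\mathcal H^{00}}$ for all $v\in\mathcal H^{00}$) with $\sup_{n\in\mathbb N,k\in X}|\langle f_n,\tilde\psi_k\rangle|w(k)<\infty$. The coefficient operator is $C_{\tilde\psi}:\mathcal H^\infty_w\to\ell^\infty_w$, $C_{\tilde\psi}f=(\langle f,\tilde\psi_k\rangle_{\overline{\mathcal H},\mathcal H^{00}})_{k\in X}$, and the norm on $\mathcal H^\infty_w$ is $\|f\|_{\mathcal H^\infty_w}:=\|C_{\tilde\psi}f\|_{\ell^\infty_w}$. *)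

theory Defs
  imports "HOL-Analysis.Analysis"
begin

text \<open>HOL-Analysis only provides real inner product spaces, so we introduce complex
  Hilbert spaces as a type class: a complete real normed vector space with a complex
  scalar multiplication extending the real one and a complex inner product, linear in
  the first and conjugate-linear in the second argument, inducing the norm.\<close>

class complex_hilbert = real_normed_vector + complete_space +
  fixes cinner :: "'a \<Rightarrow> 'a \<Rightarrow> complex"
    and scaleC :: "complex \<Rightarrow> 'a \<Rightarrow> 'a"
  assumes scaleC_add_right: "scaleC a (x + y) = scaleC a x + scaleC a y"
    and scaleC_add_left: "scaleC (a + b) x = scaleC a x + scaleC b x"
    and scaleC_scaleC: "scaleC a (scaleC b x) = scaleC (a * b) x"
    and scaleC_one: "scaleC 1 x = x"
    and scaleR_scaleC: "scaleR r x = scaleC (complex_of_real r) x"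
    and cinner_add_left: "cinner (x + y) z = cinner x z + cinner y z"
    and cinner_scaleC_left: "cinner (scaleC a x) y = a * cinner x y"
    and cinner_commute: "cinner x y = cnj (cinner y x)"
    and cinner_nonneg: "0 \<le> Re (cinner x x)"
    and cinner_eq_zero_iff: "cinner x x = 0 \<longleftrightarrow> x = 0"
    and norm_cinner: "norm x = sqrt (Re (cinner x x))"

definition is_frame :: "('i \<Rightarrow> 'a::complex_hilbert) \<Rightarrow> bool" where
  "is_frame \<psi> \<longleftrightarrow> (\<exists>A B. 0 < A \<and> 0 < B \<and> (\<forall>f.
      (\<lambda>k. (cmod (cinner f (\<psi> k)))\<^sup>2) summable_on UNIV \<and>
      A * (norm f)\<^sup>2 \<le> (\<Sum>\<^sub>\<infinity>k. (cmod (cinner f (\<psi> k)))\<^sup>2) \<and>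
      (\<Sum>\<^sub>\<infinity>k. (cmod (cinner f (\<psi> k)))\<^sup>2) \<le> B * (norm f)\<^sup>2))"

definition is_dual_frame :: "('i \<Rightarrow> 'a::complex_hilbert) \<Rightarrow> ('i \<Rightarrow> 'a) \<Rightarrow> bool" where
  "is_dual_frame \<psi> \<psi>t \<longleftrightarrow> is_frame \<psi> \<and> is_frame \<psi>t \<and>
     (\<forall>f. ((\<lambda>k. scaleC (cinner f (\<psi>t k)) (\<psi> k)) has_sum f) UNIV \<and>
          ((\<lambda>k. scaleC (cinner f (\<psi> k)) (\<psi>t k)) has_sum f) UNIV)"

definition linf_w :: "('i \<Rightarrow> real) \<Rightarrow> ('i \<Rightarrow> complex) set" where
  "linf_w w = {\<alpha>. \<exists>M. \<forall>k. cmod (\<alpha> k) * w k \<le> M}"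

definition linf_w_norm :: "('i \<Rightarrow> real) \<Rightarrow> ('i \<Rightarrow> complex) \<Rightarrow> real" where
  "linf_w_norm w \<alpha> = (SUP k. cmod (\<alpha> k) * w k)"

definition gram :: "('i \<Rightarrow> 'a::complex_hilbert) \<Rightarrow> ('i \<Rightarrow> 'a) \<Rightarrow> ('i \<Rightarrow> complex) \<Rightarrow> ('i \<Rightarrow> complex)" where
  "gram \<psi>t \<psi> \<alpha> = (\<lambda>k. \<Sum>\<^sub>\<infinity>l. cinner (\<psi> l) (\<psi>t k) * \<alpha> l)"

text \<open>Boundedness of the Gram matrix on the weighted space (Schur-type condition).\<close>
definition gram_bounded_w :: "('i \<Rightarrow> real) \<Rightarrow> ('i \<Rightarrow> 'a::complex_hilbert) \<Rightarrow> ('i \<Rightarrow> 'a) \<Rightarrow> bool" where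
  "gram_bounded_w w \<psi>t \<psi> \<longleftrightarrow> (\<exists>M. \<forall>k.
      (\<lambda>l. cmod (cinner (\<psi> l) (\<psi>t k)) * w k / w l) summable_on UNIV \<and>
      (\<Sum>\<^sub>\<infinity>l. cmod (cinner (\<psi> l) (\<psi>t k)) * w k / w l) \<le> M)"

definition closed_subspace_linf_w :: "('i \<Rightarrow> real) \<Rightarrow> ('i \<Rightarrow> complex) set \<Rightarrow> bool" where
  "closed_subspace_linf_w w V \<longleftrightarrow> V \<subseteq> linf_w w \<and> (\<lambda>k. 0) \<in> V \<and>
     (\<forall>\<alpha>\<in>V. \<forall>\<beta>\<in>V. (\<lambda>k. \<alpha> k + \<beta> k) \<in> V) \<and>
     (\<forall>c. \<forall>\<alpha>\<in>V. (\<lambda>k. c * \<alpha> k) \<in> V) \<and>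
     (\<forall>\<alpha>s \<alpha>. (\<forall>n. \<alpha>s n \<in> V) \<and> \<alpha> \<in> linf_w w \<and>
        (\<lambda>n. linf_w_norm w (\<lambda>k. \<alpha>s n k - \<alpha> k)) \<longlonglongrightarrow> 0 \<longrightarrow> \<alpha> \<in> V)"

definition H00 :: "('i \<Rightarrow> 'a::complex_hilbert) \<Rightarrow> 'a set" where
  "H00 \<psi>t = {v. \<exists>F c. finite F \<and> v = (\<Sum>k\<in>F. scaleC (c k) (\<psi>t k))}"

text \<open>Model of the completion of \<open>H\<close> w.r.t. \<open>\<sigma>(H,H00)\<close>: the conjugate-linear functionals
  on \<open>H00\<close> (normalised to be 0 off \<open>H00\<close>), with the topology of pointwise convergence on
  \<open>H00\<close>; the value \<open>\<phi> v\<close> is the extended pairing of \<open>\<phi>\<close> with \<open>v\<close>.\<close>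
definition Hbar :: "('i \<Rightarrow> 'a::complex_hilbert) \<Rightarrow> ('a \<Rightarrow> complex) set" where
  "Hbar \<psi>t = {\<phi>. (\<forall>u\<in>H00 \<psi>t. \<forall>v\<in>H00 \<psi>t. \<forall>a b.
        \<phi> (scaleC a u + scaleC b v) = cnj a * \<phi> u + cnj b * \<phi> v) \<and>
      (\<forall>v. v \<notin> H00 \<psi>t \<longrightarrow> \<phi> v = 0)}"

definition embed_H :: "('i \<Rightarrow> 'a::complex_hilbert) \<Rightarrow> 'a \<Rightarrow> ('a \<Rightarrow> complex)" where
  "embed_H \<psi>t f = (\<lambda>v. if v \<in> H00 \<psi>t then cinner f v else 0)"

definition Hinf_w :: "('i \<Rightarrow> real) \<Rightarrow> ('i \<Rightarrow> 'a::complex_hilbert) \<Rightarrow> ('a \<Rightarrow> complex) set" where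
  "Hinf_w w \<psi>t = {\<phi> \<in> Hbar \<psi>t. \<exists>fs :: nat \<Rightarrow> 'a.
      (\<forall>v\<in>H00 \<psi>t. (\<lambda>n. embed_H \<psi>t (fs n) v) \<longlonglongrightarrow> \<phi> v) \<and>
      (\<exists>M. \<forall>n k. cmod (cinner (fs n) (\<psi>t k)) * w k \<le> M)}"

definition coeff_op :: "('i \<Rightarrow> 'a::complex_hilbert) \<Rightarrow> ('a \<Rightarrow> complex) \<Rightarrow> ('i \<Rightarrow> complex)" where
  "coeff_op \<psi>t \<phi> = (\<lambda>k. \<phi> (\<psi>t k))"

definition Hinf_w_norm :: "('i \<Rightarrow> real) \<Rightarrow> ('i \<Rightarrow> 'a::complex_hilbert) \<Rightarrow> ('a \<Rightarrow> complex) \<Rightarrow> real" where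
  "Hinf_w_norm w \<psi>t \<phi> = linf_w_norm w (coeff_op \<psi>t \<phi>)"

definition banach_fun_space :: "('b \<Rightarrow> complex) set \<Rightarrow> (('b \<Rightarrow> complex) \<Rightarrow> real) \<Rightarrow> bool" where
  "banach_fun_space S N \<longleftrightarrow>
     (\<lambda>x. 0) \<in> S \<and>
     (\<forall>f\<in>S. \<forall>g\<in>S. (\<lambda>x. f x + g x) \<in> S) \<and>
     (\<forall>c. \<forall>f\<in>S. (\<lambda>x. c * f x) \<in> S) \<and>
     (\<forall>f\<in>S. 0 \<le> N f \<and> (N f = 0 \<longleftrightarrow> f = (\<lambda>x. 0))) \<and>
     (\<forall>c. \<forall>f\<in>S. N (\<lambda>x. c * f x) = cmod c * N f) \<and>
     (\<forall>f\<in>S. \<forall>g\<in>S. N (\<lambda>x. f x + g x) \<le> N f + N g) \<and>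
     (\<forall>u. (\<forall>n. u n \<in> S) \<and> (\<forall>e>0. \<exists>M. \<forall>m\<ge>M. \<forall>n\<ge>M. N (\<lambda>x. u m x - u n x) < e) \<longrightarrow>
        (\<exists>f\<in>S. (\<lambda>n. N (\<lambda>x. u n x - f x)) \<longlonglongrightarrow> 0))"

end

theory Submission
  imports Defs
begin

lemma scaleC_zero_left[simp]: "scaleC 0 (x::'a::complex_hilbert) = 0"
  using scaleR_scaleC[of 0 x] by simp
lemma scaleC_zero_right[simp]: "scaleC a (0::'a::complex_hilbert) = 0"
  using scaleC_add_right[of a "0::'a" 0] by simp
lemma scaleC_minus1: "scaleC (-1) (x::'a::complex_hilbert) = - x"
  using scaleR_scaleC[of "-1" x] by simp
lemma cinner_zero_left[simp]: "cinner (0::'a::complex_hilbert) y = 0"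
  using cinner_add_left[of "0::'a" 0 y] by simp
lemma cinner_minus_left: "cinner (- (x::'a::complex_hilbert)) y = - cinner x y"
  using cinner_scaleC_left[of "-1" x y] by (simp add: scaleC_minus1)
lemma cinner_diff_left: "cinner ((x::'a::complex_hilbert) - z) y = cinner x y - cinner z y"
  using cinner_add_left[of x "-z" y] by (simp add: cinner_minus_left)
lemma cinner_add_right: "cinner (x::'a::complex_hilbert) (y + z) = cinner x y + cinner x z"
  by (metis cinner_add_left cinner_commute complex_cnj_add)
lemma cinner_scaleC_right: "cinner (x::'a::complex_hilbert) (scaleC a y) = cnj a * cinner x y"
  by (metis cinner_commute cinner_scaleC_left complex_cnj_mult)
lemma cinner_diff_right: "cinner (x::'a::complex_hilbert) (y - z) = cinner x y - cinner x z"
  by (metis cinner_commute cinner_diff_left complex_cnj_diff)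
lemma cinner_sum_left: "cinner (\<Sum>k\<in>F. f k) (y::'a::complex_hilbert) = (\<Sum>k\<in>F. cinner (f k) y)"
  by (induction F rule: infinite_finite_induct) (auto simp: cinner_add_left)
lemma cinner_sum_right: "cinner (y::'a::complex_hilbert) (\<Sum>k\<in>F. f k) = (\<Sum>k\<in>F. cinner y (f k))"
  by (induction F rule: infinite_finite_induct) (auto simp: cinner_add_right cinner_commute[of y 0])
lemma scaleC_sum_right: "scaleC a (\<Sum>k\<in>F. f k) = (\<Sum>k\<in>F. scaleC a (f k::'a::complex_hilbert))"
  by (induction F rule: infinite_finite_induct) (auto simp: scaleC_add_right)

lemma norm_sq_cinner: "(norm (x::'a::complex_hilbert))\<^sup>2 = Re (cinner x x)"
  using norm_cinner[of x] cinner_nonneg[of x] by simp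

lemma Re_cinner_polar: "Re (cinner (x::'a::complex_hilbert) y) = ((norm (x+y))\<^sup>2 - (norm (x-y))\<^sup>2) / 4"
proof -
  have e: "cinner (x+y) (x+y) - cinner (x-y) (x-y) = 2 * cinner x y + 2 * cinner y x"
    by (simp add: cinner_add_left cinner_add_right cinner_diff_left cinner_diff_right algebra_simps)
  have r: "Re (cinner y x) = Re (cinner x y)" by (subst cinner_commute) simp
  have "Re (cinner (x+y) (x+y)) - Re (cinner (x-y) (x-y)) = Re (2 * cinner x y + 2 * cinner y x)"
    by (simp only: e [symmetric] minus_complex.sel)
  also have "\<dots> = 4 * Re (cinner x y)" using r by simp
  finally show ?thesis by (simp add: norm_sq_cinner)
qed

lemma cinner_polar_complex: "cinner (x::'a::complex_hilbert) y =
   complex_of_real (((norm (x+y))\<^sup>2 - (norm (x-y))\<^sup>2) / 4) +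
   \<i> * complex_of_real (((norm (x+scaleC \<i> y))\<^sup>2 - (norm (x-scaleC \<i> y))\<^sup>2) / 4)"
proof -
  have "Re (cinner x (scaleC \<i> y)) = Im (cinner x y)" by (simp add: cinner_scaleC_right)
  then have b: "Im (cinner x y) = ((norm (x+scaleC \<i> y))\<^sup>2 - (norm (x-scaleC \<i> y))\<^sup>2) / 4"
    using Re_cinner_polar[of x "scaleC \<i> y"] by simp
  show ?thesis
    by (simp only: complex_eq_iff Re_cinner_polar[of x y] b plus_complex.sel times_complex.sel Re_complex_of_real Im_complex_of_real complex_i_mult_minus) simp
qed

lemma isCont_cinner_left: "isCont (\<lambda>x. cinner (x::'a::complex_hilbert) y) x0"
  apply (subst cinner_polar_complex)
  by (intro continuous_intros) auto


section \<open>weighted sup norm\<close>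

lemma lw_bdd: "\<alpha> \<in> linf_w w \<Longrightarrow> bdd_above (range (\<lambda>k. cmod (\<alpha> k) * w k))"
  unfolding linf_w_def bdd_above_def by auto

lemma lw_upper: "\<alpha> \<in> linf_w w \<Longrightarrow> cmod (\<alpha> k) * w k \<le> linf_w_norm w \<alpha>"
  unfolding linf_w_norm_def by (rule cSUP_upper[OF _ lw_bdd]) auto

lemma lw_le: "(\<And>k. cmod (\<alpha> k) * w k \<le> B) \<Longrightarrow> linf_w_norm w \<alpha> \<le> B"
  unfolding linf_w_norm_def by (rule cSUP_least) auto

lemma lw_nonneg: "\<alpha> \<in> linf_w w \<Longrightarrow> \<forall>k. 0 < w k \<Longrightarrow> 0 \<le> linf_w_norm w \<alpha>"
  using lw_upper[of \<alpha> w undefined] by (metis less_le mult_nonneg_nonneg norm_ge_zero order_trans)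

lemma lw_memI: "(\<And>k. cmod (\<alpha> k) * w k \<le> B) \<Longrightarrow> \<alpha> \<in> linf_w w"
  unfolding linf_w_def by auto

lemma lw_coord: "\<alpha> \<in> linf_w w \<Longrightarrow> 0 < w k \<Longrightarrow> cmod (\<alpha> k) \<le> linf_w_norm w \<alpha> / w k"
  using lw_upper[of \<alpha> w k] by (simp add: field_simps)

lemma lw_add: assumes "\<alpha> \<in> linf_w w" "\<beta> \<in> linf_w w" "\<forall>k. 0 < w k"
  shows "(\<lambda>k. \<alpha> k + \<beta> k) \<in> linf_w w"
    and "linf_w_norm w (\<lambda>k. \<alpha> k + \<beta> k) \<le> linf_w_norm w \<alpha> + linf_w_norm w \<beta>"
proof -
  have *: "cmod (\<alpha> k + \<beta> k) * w k \<le> linf_w_norm w \<alpha> + linf_w_norm w \<beta>" for k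
  proof -
    have "cmod (\<alpha> k + \<beta> k) * w k \<le> (cmod (\<alpha> k) + cmod (\<beta> k)) * w k"
      using assms(3) by (intro mult_right_mono norm_triangle_ineq) (auto simp: less_imp_le)
    also have "\<dots> \<le> linf_w_norm w \<alpha> + linf_w_norm w \<beta>"
      using lw_upper[OF assms(1), of k] lw_upper[OF assms(2), of k] by (simp add: distrib_right)
    finally show ?thesis .
  qed
  show "(\<lambda>k. \<alpha> k + \<beta> k) \<in> linf_w w" by (rule lw_memI[OF *])
  show "linf_w_norm w (\<lambda>k. \<alpha> k + \<beta> k) \<le> linf_w_norm w \<alpha> + linf_w_norm w \<beta>" by (rule lw_le[OF *])
qed

lemma lw_scale: assumes "\<alpha> \<in> linf_w w" "\<forall>k. 0 < w k"
  shows "(\<lambda>k. c * \<alpha> k) \<in> linf_w w"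
    and "linf_w_norm w (\<lambda>k. c * \<alpha> k) = cmod c * linf_w_norm w \<alpha>"
proof -
  have *: "cmod (c * \<alpha> k) * w k \<le> cmod c * linf_w_norm w \<alpha>" for k
    using lw_upper[OF assms(1), of k] by (simp add: norm_mult mult.assoc mult_left_mono)
  show m: "(\<lambda>k. c * \<alpha> k) \<in> linf_w w" by (rule lw_memI[OF *])
  have le: "linf_w_norm w (\<lambda>k. c * \<alpha> k) \<le> cmod c * linf_w_norm w \<alpha>" by (rule lw_le[OF *])
  show "linf_w_norm w (\<lambda>k. c * \<alpha> k) = cmod c * linf_w_norm w \<alpha>"
  proof (cases "c = 0")
    case True
    then show ?thesis using le lw_nonneg[OF m assms(2)] by simp
  next
    case False
    have "cmod (\<alpha> k) * w k \<le> linf_w_norm w (\<lambda>k. c * \<alpha> k) / cmod c" for k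
      using lw_upper[OF m, of k] False by (simp add: field_simps norm_mult)
    then have "linf_w_norm w \<alpha> \<le> linf_w_norm w (\<lambda>k. c * \<alpha> k) / cmod c" by (rule lw_le)
    with False le show ?thesis by (simp add: field_simps)
  qed
qed

lemma lw_diff: assumes "\<alpha> \<in> linf_w w" "\<beta> \<in> linf_w w" "\<forall>k. 0 < w k"
  shows "(\<lambda>k. \<alpha> k - \<beta> k) \<in> linf_w w"
proof -
  have "(\<lambda>k. \<alpha> k + (-1) * \<beta> k) \<in> linf_w w"
    by (intro lw_add lw_scale assms)
  then show ?thesis by simp
qed

lemma lw_zero: "linf_w_norm w (\<lambda>k. 0) = 0"
  unfolding linf_w_norm_def by simp

lemma lw_eq0: assumes "\<alpha> \<in> linf_w w" "\<forall>k. 0 < w k" "linf_w_norm w \<alpha> = 0" shows "\<alpha> k = 0"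
  using lw_upper[OF assms(1), of k] assms(2,3) by (simp add: mult_le_0_iff less_le_not_le)

lemma lw_complete:
  assumes w: "\<forall>k. 0 < w k" and a: "\<And>n. a n \<in> linf_w w"
    and C: "\<forall>e>0. \<exists>M. \<forall>m\<ge>M. \<forall>n\<ge>M. linf_w_norm w (\<lambda>k. a m k - a n k) < e"
  shows "\<exists>\<alpha>\<in>linf_w w. (\<lambda>n. linf_w_norm w (\<lambda>k. a n k - \<alpha> k)) \<longlonglongrightarrow> 0"
proof -
  have coord: "cmod (a m k - a n k) * w k \<le> linf_w_norm w (\<lambda>k. a m k - a n k)" for m n k
    by (rule lw_upper[OF lw_diff[OF a a w]])
  have "Cauchy (\<lambda>n. a n k)" for k
  proof (rule metric_CauchyI)
    fix e :: real assume e: "0 < e"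
    obtain M where M: "\<forall>m\<ge>M. \<forall>n\<ge>M. linf_w_norm w (\<lambda>k. a m k - a n k) < e * w k"
      using C e w by (meson mult_pos_pos)
    show "\<exists>M. \<forall>m\<ge>M. \<forall>n\<ge>M. dist (a m k) (a n k) < e"
    proof (intro exI allI impI)
      fix m n assume "M \<le> m" "M \<le> n"
      then have "cmod (a m k - a n k) * w k < e * w k" using coord[of m k n] M by fastforce
      then show "dist (a m k) (a n k) < e" using w by (simp add: dist_norm)
    qed
  qed
  then have "\<exists>L. (\<lambda>n. a n k) \<longlonglongrightarrow> L" for k using Cauchy_convergent_iff convergent_def by blast
  then obtain \<alpha> where \<alpha>: "\<And>k. (\<lambda>n. a n k) \<longlonglongrightarrow> \<alpha> k" by metis
  have key: "\<exists>M. \<forall>n\<ge>M. \<forall>k. cmod (a n k - \<alpha> k) * w k \<le> e" if e: "e > 0" for e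
  proof -
    obtain M where M: "\<forall>m\<ge>M. \<forall>n\<ge>M. linf_w_norm w (\<lambda>k. a m k - a n k) < e" using C e by blast
    show ?thesis
    proof (intro exI allI impI)
      fix n k assume n: "M \<le> n"
      have "(\<lambda>m. cmod (a n k - a m k) * w k) \<longlonglongrightarrow> cmod (a n k - \<alpha> k) * w k"
        by (intro tendsto_intros \<alpha>)
      moreover have "\<forall>\<^sub>F m in sequentially. cmod (a n k - a m k) * w k \<le> e"
        using eventually_ge_at_top[of M] 
      proof eventually_elim
        case (elim m) then show ?case using coord[of n k m] M n by fastforce
      qed
      ultimately show "cmod (a n k - \<alpha> k) * w k \<le> e" by (rule tendsto_upperbound) simp
    qed
  qed
  obtain M1 where M1: "\<forall>n\<ge>M1. \<forall>k. cmod (a n k - \<alpha> k) * w k \<le> 1" using key[of 1] by auto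
  have "\<alpha> \<in> linf_w w"
  proof (rule lw_memI)
    fix k
    have "cmod (\<alpha> k) * w k \<le> (cmod (a M1 k) + cmod (a M1 k - \<alpha> k)) * w k"
      using w by (intro mult_right_mono) (auto simp: less_imp_le, metis norm_minus_commute norm_triangle_sub)
    also have "\<dots> \<le> linf_w_norm w (a M1) + 1"
      using lw_upper[OF a, of M1 k] M1[rule_format, of M1 k] by (simp add: distrib_right)
    finally show "cmod (\<alpha> k) * w k \<le> linf_w_norm w (a M1) + 1" .
  qed
  moreover have "(\<lambda>n. linf_w_norm w (\<lambda>k. a n k - \<alpha> k)) \<longlonglongrightarrow> 0"
  proof (rule LIMSEQ_I)
    fix r :: real assume r: "0 < r"
    obtain M where M: "\<forall>n\<ge>M. \<forall>k. cmod (a n k - \<alpha> k) * w k \<le> r/2" using key[of "r/2"] r by auto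
    show "\<exists>no. \<forall>n\<ge>no. norm (linf_w_norm w (\<lambda>k. a n k - \<alpha> k) - 0) < r"
    proof (intro exI allI impI)
      fix n assume n: "M \<le> n"
      have le: "linf_w_norm w (\<lambda>k. a n k - \<alpha> k) \<le> r/2" using M n by (intro lw_le) auto
      have ge: "0 \<le> linf_w_norm w (\<lambda>k. a n k - \<alpha> k)"
        using lw_nonneg[OF lw_diff[OF a \<open>\<alpha> \<in> linf_w w\<close> w] w] .
      show "norm (linf_w_norm w (\<lambda>k. a n k - \<alpha> k) - 0) < r" using le ge r by simp
    qed
  qed
  ultimately show ?thesis by blast
qed


section \<open>H00 and Hbar\<close>

lemma H00_psi: "\<psi>t k \<in> H00 \<psi>t"
  unfolding H00_def by (rule CollectI, rule exI[of _ "{k}"], rule exI[of _ "\<lambda>_. 1"]) (simp add: scaleC_one)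

lemma H00_sumI: "finite F \<Longrightarrow> (\<Sum>k\<in>F. scaleC (c k) (\<psi>t k)) \<in> H00 \<psi>t"
  unfolding H00_def by blast

lemma H00_zero: "0 \<in> H00 \<psi>t"
  using H00_sumI[of "{}"] by simp

lemma sum_restrict_scaleC:
  assumes "finite F" "F1 \<subseteq> F"
  shows "(\<Sum>k\<in>F. scaleC (if k \<in> F1 then d k else 0) (x k::'a::complex_hilbert)) = (\<Sum>k\<in>F1. scaleC (d k) (x k))"
proof -
  have "(\<Sum>k\<in>F. scaleC (if k \<in> F1 then d k else 0) (x k)) = (\<Sum>k\<in>F. if k \<in> F1 then scaleC (d k) (x k) else 0)"
    by (intro sum.cong) auto
  also have "\<dots> = (\<Sum>k\<in>F \<inter> F1. scaleC (d k) (x k))" by (rule sum.inter_restrict[symmetric, OF assms(1)])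
  also have "F \<inter> F1 = F1" using assms(2) by blast
  finally show ?thesis .
qed

lemma H00_lin:
  assumes "u \<in> H00 \<psi>t" "v \<in> H00 \<psi>t"
  shows "scaleC a u + scaleC b v \<in> H00 (\<psi>t::'i \<Rightarrow> 'a::complex_hilbert)"
proof -
  obtain F1 c1 where F1: "finite F1" "u = (\<Sum>k\<in>F1. scaleC (c1 k) (\<psi>t k))" using assms(1) unfolding H00_def by blast
  obtain F2 c2 where F2: "finite F2" "v = (\<Sum>k\<in>F2. scaleC (c2 k) (\<psi>t k))" using assms(2) unfolding H00_def by blast
  let ?F = "F1 \<union> F2"
  let ?c = "\<lambda>k. (if k \<in> F1 then a * c1 k else 0) + (if k \<in> F2 then b * c2 k else 0)"
  have fin: "finite ?F" using F1 F2 by simp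
  have "(\<Sum>k\<in>?F. scaleC (?c k) (\<psi>t k)) = (\<Sum>k\<in>?F. scaleC (if k \<in> F1 then a * c1 k else 0) (\<psi>t k))
      + (\<Sum>k\<in>?F. scaleC (if k \<in> F2 then b * c2 k else 0) (\<psi>t k))"
    by (simp add: scaleC_add_left sum.distrib)
  also have "\<dots> = (\<Sum>k\<in>F1. scaleC (a * c1 k) (\<psi>t k)) + (\<Sum>k\<in>F2. scaleC (b * c2 k) (\<psi>t k))"
    using fin by (simp add: sum_restrict_scaleC)
  also have "\<dots> = scaleC a u + scaleC b v"
    by (simp add: F1(2) F2(2) scaleC_sum_right scaleC_scaleC)
  finally show ?thesis using H00_sumI[OF fin, of ?c \<psi>t] by simp
qed

lemma Hbar_zero_val: assumes "\<phi> \<in> Hbar \<psi>t" shows "\<phi> (0::'a::complex_hilbert) = 0"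
proof -
  have "\<phi> (scaleC 0 0 + scaleC 0 0) = cnj 0 * \<phi> 0 + cnj 0 * \<phi> 0"
    using assms H00_zero[of \<psi>t] unfolding Hbar_def by blast
  then show ?thesis by simp
qed

lemma Hbar_sum:
  assumes "\<phi> \<in> Hbar \<psi>t" "finite F"
  shows "\<phi> (\<Sum>k\<in>F. scaleC (c k) (\<psi>t k::'a::complex_hilbert)) = (\<Sum>k\<in>F. cnj (c k) * \<phi> (\<psi>t k))"
  using assms(2)
proof (induction F rule: finite_induct)
  case empty then show ?case using Hbar_zero_val[OF assms(1)] by simp
next
  case (insert x F)
  have "\<phi> (\<Sum>k\<in>insert x F. scaleC (c k) (\<psi>t k)) = \<phi> (scaleC (c x) (\<psi>t x) + scaleC 1 (\<Sum>k\<in>F. scaleC (c k) (\<psi>t k)))"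
    using insert by (simp add: scaleC_one)
  also have "\<dots> = cnj (c x) * \<phi> (\<psi>t x) + cnj 1 * \<phi> (\<Sum>k\<in>F. scaleC (c k) (\<psi>t k))"
    using assms(1) H00_psi[of \<psi>t x] H00_sumI[OF insert(1), of c \<psi>t] unfolding Hbar_def by blast
  finally show ?case using insert by simp
qed

lemma Hbar_eq:
  assumes "\<phi> \<in> Hbar \<psi>t" "\<theta> \<in> Hbar \<psi>t" "\<And>k. \<phi> (\<psi>t k) = \<theta> (\<psi>t k)"
  shows "\<phi> = \<theta>"
proof
  fix v :: 'a
  show "\<phi> v = \<theta> v"
  proof (cases "v \<in> H00 \<psi>t")
    case True
    then obtain F c where "finite F" "v = (\<Sum>k\<in>F. scaleC (c k) (\<psi>t k))" unfolding H00_def by blast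
    then show ?thesis using Hbar_sum[OF assms(1)] Hbar_sum[OF assms(2)] assms(3) by simp
  next
    case False then show ?thesis using assms(1,2) unfolding Hbar_def by auto
  qed
qed

lemma Hbar_limit:
  assumes "\<And>v. v \<in> H00 \<psi>t \<Longrightarrow> (\<lambda>n. cinner (fs n) v) \<longlonglongrightarrow> L v"
  shows "(\<lambda>v. if v \<in> H00 \<psi>t then L v else 0) \<in> Hbar (\<psi>t :: 'i \<Rightarrow> 'a::complex_hilbert)"
  unfolding Hbar_def
proof (intro CollectI conjI ballI allI impI)
  fix u v a b assume uv: "u \<in> H00 \<psi>t" "v \<in> H00 \<psi>t"
  have m: "scaleC a u + scaleC b v \<in> H00 \<psi>t" using H00_lin[OF uv] .
  have "(\<lambda>n. cinner (fs n) (scaleC a u + scaleC b v)) \<longlonglongrightarrow> cnj a * L u + cnj b * L v"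
    unfolding cinner_add_right cinner_scaleC_right by (intro tendsto_intros assms uv)
  moreover have "(\<lambda>n. cinner (fs n) (scaleC a u + scaleC b v)) \<longlonglongrightarrow> L (scaleC a u + scaleC b v)"
    using assms[OF m] .
  ultimately have "L (scaleC a u + scaleC b v) = cnj a * L u + cnj b * L v" using LIMSEQ_unique by blast
  then show "(if scaleC a u + scaleC b v \<in> H00 \<psi>t then L (scaleC a u + scaleC b v) else 0) =
       cnj a * (if u \<in> H00 \<psi>t then L u else 0) + cnj b * (if v \<in> H00 \<psi>t then L v else 0)"
    using m uv by simp
qed auto

lemma Hbar_add: "\<phi> \<in> Hbar \<psi>t \<Longrightarrow> \<theta> \<in> Hbar \<psi>t \<Longrightarrow> (\<lambda>x. \<phi> x + \<theta> x) \<in> Hbar \<psi>t"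
  unfolding Hbar_def by (auto simp: algebra_simps)

lemma Hbar_scale: "\<phi> \<in> Hbar \<psi>t \<Longrightarrow> (\<lambda>x. c * \<phi> x) \<in> Hbar \<psi>t"
  unfolding Hbar_def by (auto simp: algebra_simps)

lemma Hbar_0: "(\<lambda>x. 0) \<in> Hbar \<psi>t"
  unfolding Hbar_def by auto


section \<open>Gram and dominated convergence\<close>

lemma infsum_dct:
  fixes s :: "nat \<Rightarrow> 'i \<Rightarrow> complex" and g :: "'i \<Rightarrow> real"
  assumes gs: "g summable_on UNIV" and bd: "\<And>n l. cmod (s n l) \<le> g l" and lim: "\<And>l. (\<lambda>n. s n l) \<longlonglongrightarrow> f l"
  shows "(\<lambda>n. infsum (s n) UNIV) \<longlonglongrightarrow> infsum f UNIV"
proof -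
  have gnn: "0 \<le> g l" for l using bd[of 0 l] norm_ge_zero order_trans by blast
  have "(\<lambda>x. norm (g x)) summable_on UNIV" using gs gnn by simp
  then have "Infinite_Set_Sum.abs_summable_on g UNIV" using abs_summable_equivalent by blast
  then have gi: "integrable (count_space UNIV) g" unfolding Infinite_Set_Sum.abs_summable_on_def .
  have bd': "\<And>n. AE x in count_space UNIV. norm (s n x) \<le> g x" using bd by simp
  have lim': "AE x in count_space UNIV. (\<lambda>n. s n x) \<longlonglongrightarrow> f x" using lim by simp
  note D = integrable_dominated_convergence[OF _ _ gi lim' bd'] integrable_dominated_convergence2[OF _ _ gi lim' bd']
     integral_dominated_convergence[OF _ _ gi lim' bd']
  have if_: "integrable (count_space UNIV) f" by (rule D(1)) auto
  have is_: "integrable (count_space UNIV) (s n)" for n by (rule D(2)) auto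
  have conv: "(\<lambda>n. integral\<^sup>L (count_space UNIV) (s n)) \<longlonglongrightarrow> integral\<^sup>L (count_space UNIV) f" by (rule D(3)) auto
  have eqs: "integral\<^sup>L (count_space UNIV) h = infsum h UNIV" if "integrable (count_space UNIV) h" for h :: "'i \<Rightarrow> complex"
    using infsetsum_infsum[of h UNIV] that unfolding Infinite_Set_Sum.abs_summable_on_def infsetsum_def by simp
  show ?thesis using conv unfolding eqs[OF if_] eqs[OF is_] .
qed

lemma gram_est:
  fixes \<psi> \<psi>t :: "'i \<Rightarrow> 'a::complex_hilbert"
  assumes w: "\<forall>k. 0 < w k"
    and gs: "(\<lambda>l. cmod (cinner (\<psi> l) (\<psi>t k)) * w k / w l) summable_on UNIV"
    and gM: "(\<Sum>\<^sub>\<infinity>l. cmod (cinner (\<psi> l) (\<psi>t k)) * w k / w l) \<le> Mg"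
    and a: "\<alpha> \<in> linf_w w"
  shows "(\<lambda>l. norm (cinner (\<psi> l) (\<psi>t k) * \<alpha> l)) summable_on UNIV"
    and "(\<lambda>l. cinner (\<psi> l) (\<psi>t k) * \<alpha> l) summable_on UNIV"
    and "cmod (gram \<psi>t \<psi> \<alpha> k) * w k \<le> Mg * linf_w_norm w \<alpha>"
    and "(\<Sum>\<^sub>\<infinity>l. norm (cinner (\<psi> l) (\<psi>t k) * \<alpha> l)) * w k \<le> Mg * linf_w_norm w \<alpha>"
proof -
  let ?N = "linf_w_norm w \<alpha>"
  let ?g = "\<lambda>l. cmod (cinner (\<psi> l) (\<psi>t k)) * w k / w l * (?N / w k)"
  have N0: "0 \<le> ?N" using lw_nonneg[OF a w] .
  have gsum: "?g summable_on UNIV" by (rule summable_on_cmult_left[OF gs])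
  have le: "norm (cinner (\<psi> l) (\<psi>t k) * \<alpha> l) \<le> ?g l" for l
  proof -
    have "norm (cinner (\<psi> l) (\<psi>t k) * \<alpha> l) = cmod (cinner (\<psi> l) (\<psi>t k)) * cmod (\<alpha> l)" by (simp add: norm_mult)
    also have "\<dots> \<le> cmod (cinner (\<psi> l) (\<psi>t k)) * (?N / w l)"
      using lw_coord[OF a, of l] w by (intro mult_left_mono) auto
    also have "\<dots> = ?g l" using w[rule_format, of k] w[rule_format, of l] by (simp add: field_simps)
    finally show ?thesis .
  qed
  show ns: "(\<lambda>l. norm (cinner (\<psi> l) (\<psi>t k) * \<alpha> l)) summable_on UNIV"
    by (rule summable_on_comparison_test[OF gsum]) (use le in auto)
  show "(\<lambda>l. cinner (\<psi> l) (\<psi>t k) * \<alpha> l) summable_on UNIV"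
    by (rule abs_summable_summable[OF ns])
  have "(\<Sum>\<^sub>\<infinity>l. norm (cinner (\<psi> l) (\<psi>t k) * \<alpha> l)) \<le> (\<Sum>\<^sub>\<infinity>l. ?g l)" by (rule infsum_mono[OF ns gsum le])
  also have "\<dots> = (\<Sum>\<^sub>\<infinity>l. cmod (cinner (\<psi> l) (\<psi>t k)) * w k / w l) * (?N / w k)"
    by (rule infsum_cmult_left) (use gs in auto)
  also have "\<dots> \<le> Mg * (?N / w k)" using gM N0 w[rule_format, of k] by (intro mult_right_mono) auto
  finally have A: "(\<Sum>\<^sub>\<infinity>l. norm (cinner (\<psi> l) (\<psi>t k) * \<alpha> l)) \<le> Mg * (?N / w k)" .
  then show B: "(\<Sum>\<^sub>\<infinity>l. norm (cinner (\<psi> l) (\<psi>t k) * \<alpha> l)) * w k \<le> Mg * ?N"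
    using w[rule_format, of k] by (simp add: field_simps)
  have "cmod (gram \<psi>t \<psi> \<alpha> k) \<le> (\<Sum>\<^sub>\<infinity>l. norm (cinner (\<psi> l) (\<psi>t k) * \<alpha> l))"
    unfolding gram_def by (rule norm_infsum_bound[OF ns])
  then have "cmod (gram \<psi>t \<psi> \<alpha> k) * w k \<le> (\<Sum>\<^sub>\<infinity>l. norm (cinner (\<psi> l) (\<psi>t k) * \<alpha> l)) * w k"
    using w[rule_format, of k] by (intro mult_right_mono) auto
  with B show "cmod (gram \<psi>t \<psi> \<alpha> k) * w k \<le> Mg * ?N" by linarith
qed


lemma reconstr:
  fixes \<psi> \<psi>t :: "'i \<Rightarrow> 'a::complex_hilbert"
  assumes "is_dual_frame \<psi> \<psi>t"
  shows "cinner f (\<psi>t k) = (\<Sum>\<^sub>\<infinity>l. cinner (\<psi> l) (\<psi>t k) * cinner f (\<psi>t l))"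
proof -
  have hs: "((\<lambda>l. scaleC (cinner f (\<psi>t l)) (\<psi> l)) has_sum f) UNIV"
    using assms unfolding is_dual_frame_def by blast
  have ad: "Modules.additive (\<lambda>x. cinner (x::'a::complex_hilbert) (\<psi>t k))"
    by (simp add: Modules.additive_def cinner_add_left)
  have "(((\<lambda>x. cinner x (\<psi>t k)) \<circ> (\<lambda>l. scaleC (cinner f (\<psi>t l)) (\<psi> l))) has_sum cinner f (\<psi>t k)) UNIV"
    by (rule has_sum_comm_additive[OF ad _ hs]) (use isCont_cinner_left isCont_def in blast)
  then have "((\<lambda>l. cinner (\<psi> l) (\<psi>t k) * cinner f (\<psi>t l)) has_sum cinner f (\<psi>t k)) UNIV"
    by (simp add: o_def cinner_scaleC_left mult.commute)
  then show ?thesis by (simp add: infsumI)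
qed

lemma HinfI:
  assumes "\<phi> \<in> Hbar \<psi>t" "\<And>v. v \<in> H00 \<psi>t \<Longrightarrow> (\<lambda>n. cinner (fs n) v) \<longlonglongrightarrow> \<phi> v"
    "\<And>n k. cmod (cinner (fs n) (\<psi>t k)) * w k \<le> M"
  shows "\<phi> \<in> Hinf_w w \<psi>t"
  unfolding Hinf_w_def embed_H_def using assms by (intro CollectI conjI exI[of _ fs]) auto

lemma HinfE:
  assumes "\<phi> \<in> Hinf_w w \<psi>t"
  obtains fs M where "\<phi> \<in> Hbar \<psi>t" "\<And>v. v \<in> H00 \<psi>t \<Longrightarrow> (\<lambda>n. cinner (fs n) v) \<longlonglongrightarrow> \<phi> v"
    "\<And>n k. cmod (cinner (fs n) (\<psi>t k)) * w k \<le> M"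
proof -
  from assms obtain fs M where "\<phi> \<in> Hbar \<psi>t" "\<forall>v\<in>H00 \<psi>t. (\<lambda>n. embed_H \<psi>t (fs n) v) \<longlonglongrightarrow> \<phi> v"
    "\<forall>n k. cmod (cinner (fs n) (\<psi>t k)) * w k \<le> M" unfolding Hinf_w_def by blast
  moreover have "v \<in> H00 \<psi>t \<Longrightarrow> (\<lambda>n. embed_H \<psi>t (fs n) v) = (\<lambda>n. cinner (fs n) v)" for v
    by (simp add: embed_H_def)
  ultimately show ?thesis using that[of fs M] by auto
qed

lemma coeff_in:
  assumes "\<phi> \<in> Hinf_w w \<psi>t"
  shows "coeff_op \<psi>t \<phi> \<in> linf_w w"
proof -
  obtain fs M where c: "\<And>v. v \<in> H00 \<psi>t \<Longrightarrow> (\<lambda>n. cinner (fs n) v) \<longlonglongrightarrow> \<phi> v"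
    and b: "\<And>n k. cmod (cinner (fs n) (\<psi>t k)) * w k \<le> M" using HinfE[OF assms] by metis
  show ?thesis
  proof (rule lw_memI)
    fix k
    have "(\<lambda>n. cmod (cinner (fs n) (\<psi>t k)) * w k) \<longlonglongrightarrow> cmod (\<phi> (\<psi>t k)) * w k"
      by (intro tendsto_intros c H00_psi)
    then show "cmod (coeff_op \<psi>t \<phi> k) * w k \<le> M" unfolding coeff_op_def
      by (rule tendsto_upperbound) (use b in auto)
  qed
qed

lemma coeff_fixed:
  assumes w: "\<forall>k. 0 < w k" and dual: "is_dual_frame \<psi> \<psi>t"
    and gb: "\<forall>k. (\<lambda>l. cmod (cinner (\<psi> l) (\<psi>t k)) * w k / w l) summable_on UNIV"
    and ph: "\<phi> \<in> Hinf_w w \<psi>t"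
  shows "gram \<psi>t \<psi> (coeff_op \<psi>t \<phi>) = coeff_op \<psi>t \<phi>"
proof
  fix k
  obtain fs M where c: "\<And>v. v \<in> H00 \<psi>t \<Longrightarrow> (\<lambda>n. cinner (fs n) v) \<longlonglongrightarrow> \<phi> v"
    and b: "\<And>n k. cmod (cinner (fs n) (\<psi>t k)) * w k \<le> M" using HinfE[OF ph] by metis
  let ?G = "\<lambda>l. cinner (\<psi> l) (\<psi>t k)"
  let ?g = "\<lambda>l. cmod (?G l) * w k / w l * (M / w k)"
  have gs: "?g summable_on UNIV" using gb by (intro summable_on_cmult_left) auto
  have bd: "cmod (?G l * cinner (fs n) (\<psi>t l)) \<le> ?g l" for n l
  proof -
    have "cmod (cinner (fs n) (\<psi>t l)) \<le> M / w l" using b[of n l] w by (simp add: field_simps)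
    then have "cmod (?G l) * cmod (cinner (fs n) (\<psi>t l)) \<le> cmod (?G l) * (M / w l)"
      by (intro mult_left_mono) auto
    also have "\<dots> = ?g l" using w[rule_format, of k] by (simp add: field_simps)
    finally show ?thesis by (simp add: norm_mult)
  qed
  have lim: "(\<lambda>n. ?G l * cinner (fs n) (\<psi>t l)) \<longlonglongrightarrow> ?G l * coeff_op \<psi>t \<phi> l" for l
    unfolding coeff_op_def by (intro tendsto_intros c H00_psi)
  have "(\<lambda>n. \<Sum>\<^sub>\<infinity>l. ?G l * cinner (fs n) (\<psi>t l)) \<longlonglongrightarrow> (\<Sum>\<^sub>\<infinity>l. ?G l * coeff_op \<psi>t \<phi> l)"
    by (rule infsum_dct[OF gs bd lim])
  then have "(\<lambda>n. cinner (fs n) (\<psi>t k)) \<longlonglongrightarrow> gram \<psi>t \<psi> (coeff_op \<psi>t \<phi>) k"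
    unfolding gram_def by (simp flip: reconstr[OF dual])
  moreover have "(\<lambda>n. cinner (fs n) (\<psi>t k)) \<longlonglongrightarrow> coeff_op \<psi>t \<phi> k"
    unfolding coeff_op_def by (intro c H00_psi)
  ultimately show "gram \<psi>t \<psi> (coeff_op \<psi>t \<phi>) k = coeff_op \<psi>t \<phi> k" by (rule LIMSEQ_unique)
qed

lemma exhaust_lim:
  fixes h :: "'i::countable \<Rightarrow> complex"
  assumes "h summable_on UNIV"
  shows "(\<lambda>N. sum h (to_nat -` {..<N})) \<longlonglongrightarrow> infsum h UNIV"
proof -
  have fl: "filterlim (\<lambda>N. to_nat -` {..<N}) (finite_subsets_at_top (UNIV::'i set)) at_top"
    unfolding filterlim_finite_subsets_at_top
  proof (safe, goal_cases)
    case (1 X)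
    have "finite (to_nat ` X)" using 1 by simp
    then obtain n where n: "to_nat ` X \<subseteq> {..<n}" by (auto simp: finite_nat_set_iff_bounded)
    show ?case using eventually_ge_at_top[of n]
      by eventually_elim (use n in \<open>auto intro: finite_vimageI\<close>)
  qed
  show ?thesis by (rule filterlim_compose[OF infsum_tendsto[OF assms] fl])
qed


lemma gram_lin:
  fixes \<psi> \<psi>t :: "'i \<Rightarrow> 'a::complex_hilbert"
  assumes w: "\<forall>k. 0 < w k"
    and gb: "\<forall>k. (\<lambda>l. cmod (cinner (\<psi> l) (\<psi>t k)) * w k / w l) summable_on UNIV \<and>
      (\<Sum>\<^sub>\<infinity>l. cmod (cinner (\<psi> l) (\<psi>t k)) * w k / w l) \<le> Mg"
    and a: "\<alpha> \<in> linf_w w" and b: "\<beta> \<in> linf_w w"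
  shows "gram \<psi>t \<psi> (\<lambda>l. \<alpha> l + c * \<beta> l) = (\<lambda>k. gram \<psi>t \<psi> \<alpha> k + c * gram \<psi>t \<psi> \<beta> k)"
proof
  fix k
  have sa: "(\<lambda>l. cinner (\<psi> l) (\<psi>t k) * \<alpha> l) summable_on UNIV" using gram_est(2)[OF w _ _ a] gb by blast
  have sb: "(\<lambda>l. cinner (\<psi> l) (\<psi>t k) * \<beta> l) summable_on UNIV" using gram_est(2)[OF w _ _ b] gb by blast
  have "gram \<psi>t \<psi> (\<lambda>l. \<alpha> l + c * \<beta> l) k =
     (\<Sum>\<^sub>\<infinity>l. cinner (\<psi> l) (\<psi>t k) * \<alpha> l + c * (cinner (\<psi> l) (\<psi>t k) * \<beta> l))"
    unfolding gram_def by (simp add: algebra_simps)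
  also have "\<dots> = (\<Sum>\<^sub>\<infinity>l. cinner (\<psi> l) (\<psi>t k) * \<alpha> l) + (\<Sum>\<^sub>\<infinity>l. c * (cinner (\<psi> l) (\<psi>t k) * \<beta> l))"
    by (rule infsum_add[OF sa summable_on_cmult_right[OF sb]])
  also have "(\<Sum>\<^sub>\<infinity>l. c * (cinner (\<psi> l) (\<psi>t k) * \<beta> l)) = c * (\<Sum>\<^sub>\<infinity>l. cinner (\<psi> l) (\<psi>t k) * \<beta> l)"
    by (rule infsum_cmult_right) (use sb in auto)
  finally show "gram \<psi>t \<psi> (\<lambda>l. \<alpha> l + c * \<beta> l) k = gram \<psi>t \<psi> \<alpha> k + c * gram \<psi>t \<psi> \<beta> k"
    unfolding gram_def .
qed

lemma construct:
  fixes \<psi> \<psi>t :: "'i::countable \<Rightarrow> 'a::complex_hilbert"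
  assumes w: "\<forall>k. 0 < w k"
    and gb: "\<forall>k. (\<lambda>l. cmod (cinner (\<psi> l) (\<psi>t k)) * w k / w l) summable_on UNIV \<and>
      (\<Sum>\<^sub>\<infinity>l. cmod (cinner (\<psi> l) (\<psi>t k)) * w k / w l) \<le> Mg"
    and a: "\<alpha> \<in> linf_w w" and fx: "gram \<psi>t \<psi> \<alpha> = \<alpha>"
  shows "\<exists>\<phi>\<in>Hinf_w w \<psi>t. coeff_op \<psi>t \<phi> = \<alpha>"
proof -
  define F :: "nat \<Rightarrow> 'i set" where "F N = to_nat -` {..<N}" for N
  have finF: "finite (F N)" for N unfolding F_def by (rule finite_vimageI) auto
  define fs where "fs N = (\<Sum>l\<in>F N. scaleC (\<alpha> l) (\<psi> l))" for N
  have cf: "cinner (fs N) (\<psi>t k) = (\<Sum>l\<in>F N. cinner (\<psi> l) (\<psi>t k) * \<alpha> l)" for N k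
    unfolding fs_def cinner_sum_left by (simp add: cinner_scaleC_left mult.commute)
  have conv: "(\<lambda>N. cinner (fs N) (\<psi>t k)) \<longlonglongrightarrow> \<alpha> k" for k
  proof -
    have "(\<lambda>l. cinner (\<psi> l) (\<psi>t k) * \<alpha> l) summable_on UNIV" using gram_est(2)[OF w _ _ a] gb by blast
    from exhaust_lim[OF this] have "(\<lambda>N. cinner (fs N) (\<psi>t k)) \<longlonglongrightarrow> gram \<psi>t \<psi> \<alpha> k"
      unfolding cf F_def gram_def .
    then show ?thesis using fx by simp
  qed
  have bound: "cmod (cinner (fs N) (\<psi>t k)) * w k \<le> Mg * linf_w_norm w \<alpha>" for N k
  proof -
    have ns: "(\<lambda>l. norm (cinner (\<psi> l) (\<psi>t k) * \<alpha> l)) summable_on UNIV" using gram_est(1)[OF w _ _ a] gb by blast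
    have B: "(\<Sum>\<^sub>\<infinity>l. norm (cinner (\<psi> l) (\<psi>t k) * \<alpha> l)) * w k \<le> Mg * linf_w_norm w \<alpha>"
      using gram_est(4)[OF w _ _ a] gb by blast
    have "cmod (cinner (fs N) (\<psi>t k)) \<le> (\<Sum>l\<in>F N. norm (cinner (\<psi> l) (\<psi>t k) * \<alpha> l))"
      unfolding cf by (rule norm_sum)
    also have "\<dots> = (\<Sum>\<^sub>\<infinity>l\<in>F N. norm (cinner (\<psi> l) (\<psi>t k) * \<alpha> l))" using finF by simp
    also have "\<dots> \<le> (\<Sum>\<^sub>\<infinity>l. norm (cinner (\<psi> l) (\<psi>t k) * \<alpha> l))"
      by (rule infsum_mono_neutral) (use finF ns in auto)
    finally have "cmod (cinner (fs N) (\<psi>t k)) * w k \<le> (\<Sum>\<^sub>\<infinity>l. norm (cinner (\<psi> l) (\<psi>t k) * \<alpha> l)) * w k"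
      using w[rule_format, of k] by (intro mult_right_mono) auto
    with B show ?thesis by linarith
  qed
  have ex: "\<exists>L. (\<lambda>N. cinner (fs N) v) \<longlonglongrightarrow> L" if v: "v \<in> H00 \<psi>t" for v
  proof -
    obtain G c where G: "finite G" "v = (\<Sum>k\<in>G. scaleC (c k) (\<psi>t k))" using v unfolding H00_def by blast
    have "(\<lambda>N. cinner (fs N) v) = (\<lambda>N. \<Sum>k\<in>G. cnj (c k) * cinner (fs N) (\<psi>t k))"
      unfolding G(2) cinner_sum_right by (simp add: cinner_scaleC_right)
    moreover have "(\<lambda>N. \<Sum>k\<in>G. cnj (c k) * cinner (fs N) (\<psi>t k)) \<longlonglongrightarrow> (\<Sum>k\<in>G. cnj (c k) * \<alpha> k)"
      by (intro tendsto_intros conv)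
    ultimately show ?thesis by auto
  qed
  define L where "L v = lim (\<lambda>N. cinner (fs N) v)" for v
  have Lc: "(\<lambda>N. cinner (fs N) v) \<longlonglongrightarrow> L v" if "v \<in> H00 \<psi>t" for v
    unfolding L_def using ex[OF that] convergent_LIMSEQ_iff convergent_def by blast
  define \<phi> where "\<phi> = (\<lambda>v. if v \<in> H00 \<psi>t then L v else 0)"
  have hb: "\<phi> \<in> Hbar \<psi>t" unfolding \<phi>_def by (rule Hbar_limit[OF Lc])
  have hi: "\<phi> \<in> Hinf_w w \<psi>t"
    by (rule HinfI[where fs=fs and M="Mg * linf_w_norm w \<alpha>"]) (use hb bound Lc in \<open>auto simp: \<phi>_def\<close>)
  have "coeff_op \<psi>t \<phi> = \<alpha>"
  proof
    fix k
    have "(\<lambda>N. cinner (fs N) (\<psi>t k)) \<longlonglongrightarrow> coeff_op \<psi>t \<phi> k"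
      unfolding coeff_op_def \<phi>_def using Lc[OF H00_psi] H00_psi[of \<psi>t k] by simp
    then show "coeff_op \<psi>t \<phi> k = \<alpha> k" using conv LIMSEQ_unique by blast
  qed
  with hi show ?thesis by blast
qed


lemma embed_cinner: "v \<in> H00 \<psi>t \<Longrightarrow> embed_H \<psi>t f v = cinner f v"
  by (simp add: embed_H_def)

theorem mainTheorem10:
  fixes \<psi> \<psi>t :: "'i::countable \<Rightarrow> 'a::complex_hilbert"
    and w :: "'i \<Rightarrow> real"
  assumes separable: "\<exists>D::'a set. countable D \<and> closure D = UNIV"
    and w_pos: "\<forall>k. 0 < w k"
    and dual: "is_dual_frame \<psi> \<psi>t"
    and gram_bdd: "gram_bounded_w w \<psi>t \<psi>"
  shows "closed_subspace_linf_w w {\<alpha> \<in> linf_w w. gram \<psi>t \<psi> \<alpha> = \<alpha>}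
    \<and> (\<forall>\<phi>\<in>Hinf_w w \<psi>t. coeff_op \<psi>t \<phi> \<in> linf_w w)
    \<and> banach_fun_space (Hinf_w w \<psi>t) (Hinf_w_norm w \<psi>t)"
proof -
  note w = w_pos
  obtain Mg where gb: "\<forall>k. (\<lambda>l. cmod (cinner (\<psi> l) (\<psi>t k)) * w k / w l) summable_on UNIV \<and>
      (\<Sum>\<^sub>\<infinity>l. cmod (cinner (\<psi> l) (\<psi>t k)) * w k / w l) \<le> Mg"
    using gram_bdd unfolding gram_bounded_w_def by blast
  have gbs: "\<forall>k. (\<lambda>l. cmod (cinner (\<psi> l) (\<psi>t k)) * w k / w l) summable_on UNIV" using gb by blast
  let ?V = "{\<alpha> \<in> linf_w w. gram \<psi>t \<psi> \<alpha> = \<alpha>}"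
  have z: "(\<lambda>k. 0) \<in> linf_w w" by (rule lw_memI[of _ _ 0]) simp
  have g0: "gram \<psi>t \<psi> (\<lambda>k. 0) = (\<lambda>k. 0)" by (simp add: gram_def)
  have P1: "closed_subspace_linf_w w ?V"
    unfolding closed_subspace_linf_w_def
  proof (intro conjI ballI allI impI)
    show "?V \<subseteq> linf_w w" by blast
    show "(\<lambda>k. 0) \<in> ?V" using z g0 by simp
  next
    fix \<alpha> \<beta> assume a: "\<alpha> \<in> ?V" and b: "\<beta> \<in> ?V"
    have "gram \<psi>t \<psi> (\<lambda>l. \<alpha> l + 1 * \<beta> l) = (\<lambda>k. gram \<psi>t \<psi> \<alpha> k + 1 * gram \<psi>t \<psi> \<beta> k)"
      using a b by (intro gram_lin[OF w gb]) auto
    then show "(\<lambda>k. \<alpha> k + \<beta> k) \<in> ?V" using a b lw_add(1)[OF _ _ w, of \<alpha> \<beta>] by simp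
  next
    fix c \<alpha> assume a: "\<alpha> \<in> ?V"
    have "gram \<psi>t \<psi> (\<lambda>l. 0 + c * \<alpha> l) = (\<lambda>k. gram \<psi>t \<psi> (\<lambda>k. 0) k + c * gram \<psi>t \<psi> \<alpha> k)"
      using a z by (intro gram_lin[OF w gb]) auto
    then show "(\<lambda>k. c * \<alpha> k) \<in> ?V" using a lw_scale(1)[OF _ w, of \<alpha> c] g0 by simp
  next
    fix \<alpha>s \<alpha>
    assume H: "(\<forall>n. \<alpha>s n \<in> ?V) \<and> \<alpha> \<in> linf_w w \<and> (\<lambda>n. linf_w_norm w (\<lambda>k. \<alpha>s n k - \<alpha> k)) \<longlonglongrightarrow> 0"
    then have as: "\<And>n. \<alpha>s n \<in> linf_w w" "\<And>n. gram \<psi>t \<psi> (\<alpha>s n) = \<alpha>s n" and a: "\<alpha> \<in> linf_w w"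
      and lim: "(\<lambda>n. linf_w_norm w (\<lambda>k. \<alpha>s n k - \<alpha> k)) \<longlonglongrightarrow> 0" by auto
    have "gram \<psi>t \<psi> \<alpha> k = \<alpha> k" for k
    proof -
      define d where "d n = (\<lambda>l. \<alpha>s n l - \<alpha> l)" for n
      have dl: "d n \<in> linf_w w" for n unfolding d_def by (rule lw_diff[OF as(1) a w])
      have gd: "gram \<psi>t \<psi> (d n) k = \<alpha>s n k - gram \<psi>t \<psi> \<alpha> k" for n
      proof -
        have "gram \<psi>t \<psi> (\<lambda>l. \<alpha>s n l + (-1) * \<alpha> l) = (\<lambda>k. gram \<psi>t \<psi> (\<alpha>s n) k + (-1) * gram \<psi>t \<psi> \<alpha> k)"
          by (rule gram_lin[OF w gb as(1) a])
        then show ?thesis unfolding d_def using as(2)[of n] by (simp add: fun_eq_iff)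
      qed
      have bd: "cmod (gram \<psi>t \<psi> \<alpha> k - \<alpha> k) * w k \<le> (1 + Mg) * linf_w_norm w (d n)" for n
      proof -
        have "gram \<psi>t \<psi> \<alpha> k - \<alpha> k = d n k - gram \<psi>t \<psi> (d n) k" using gd[of n] by (simp add: d_def)
        then have "cmod (gram \<psi>t \<psi> \<alpha> k - \<alpha> k) * w k \<le> (cmod (d n k) + cmod (gram \<psi>t \<psi> (d n) k)) * w k"
          using w[rule_format, of k] norm_triangle_ineq4[of "d n k" "gram \<psi>t \<psi> (d n) k"] by (intro mult_right_mono) auto
        also have "\<dots> \<le> linf_w_norm w (d n) + Mg * linf_w_norm w (d n)"
          using lw_upper[OF dl, of n k] gram_est(3)[OF w _ _ dl[of n], of \<psi> \<psi>t k Mg] gb by (simp add: distrib_right)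
        finally show ?thesis by (simp add: distrib_right)
      qed
      have "(\<lambda>n. (1 + Mg) * linf_w_norm w (d n)) \<longlonglongrightarrow> (1 + Mg) * 0"
        unfolding d_def by (intro tendsto_intros lim)
      then have "cmod (gram \<psi>t \<psi> \<alpha> k - \<alpha> k) * w k \<le> 0"
        by (intro tendsto_lowerbound[where f="\<lambda>n. (1 + Mg) * linf_w_norm w (d n)"]) (use bd in auto)
      then show ?thesis using w[rule_format, of k] by (simp add: mult_le_0_iff)
    qed
    then show "\<alpha> \<in> ?V" using a by auto
  qed
  have P2: "\<forall>\<phi>\<in>Hinf_w w \<psi>t. coeff_op \<psi>t \<phi> \<in> linf_w w" using coeff_in by blast
  have P3: "banach_fun_space (Hinf_w w \<psi>t) (Hinf_w_norm w \<psi>t)"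
    unfolding banach_fun_space_def
  proof (intro conjI ballI allI impI)
    show "(\<lambda>x. 0) \<in> Hinf_w w \<psi>t"
      by (rule HinfI[where fs="\<lambda>n. 0" and M=0]) (auto simp: Hbar_0)
  next
    fix f g assume f: "f \<in> Hinf_w w \<psi>t" and g: "g \<in> Hinf_w w \<psi>t"
    obtain fs M1 where f1: "f \<in> Hbar \<psi>t" "\<And>v. v \<in> H00 \<psi>t \<Longrightarrow> (\<lambda>n. cinner (fs n) v) \<longlonglongrightarrow> f v"
      "\<And>n k. cmod (cinner (fs n) (\<psi>t k)) * w k \<le> M1" using HinfE[OF f] by metis
    obtain gs M2 where g1: "g \<in> Hbar \<psi>t" "\<And>v. v \<in> H00 \<psi>t \<Longrightarrow> (\<lambda>n. cinner (gs n) v) \<longlonglongrightarrow> g v"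
      "\<And>n k. cmod (cinner (gs n) (\<psi>t k)) * w k \<le> M2" using HinfE[OF g] by metis
    show "(\<lambda>x. f x + g x) \<in> Hinf_w w \<psi>t"
    proof (rule HinfI[where fs="\<lambda>n. fs n + gs n" and M="M1 + M2"])
      show "(\<lambda>x. f x + g x) \<in> Hbar \<psi>t" by (rule Hbar_add[OF f1(1) g1(1)])
      show "(\<lambda>n. cinner (fs n + gs n) v) \<longlonglongrightarrow> f v + g v" if "v \<in> H00 \<psi>t" for v
        unfolding cinner_add_left by (intro tendsto_intros f1(2) g1(2) that)
      fix n k
      have "cmod (cinner (fs n + gs n) (\<psi>t k)) * w k \<le> (cmod (cinner (fs n) (\<psi>t k)) + cmod (cinner (gs n) (\<psi>t k))) * w k"
        unfolding cinner_add_left using w[rule_format, of k] by (intro mult_right_mono norm_triangle_ineq) auto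
      also have "\<dots> \<le> M1 + M2" using f1(3)[of n k] g1(3)[of n k] by (simp add: distrib_right)
      finally show "cmod (cinner (fs n + gs n) (\<psi>t k)) * w k \<le> M1 + M2" .
    qed
    have cf: "coeff_op \<psi>t f \<in> linf_w w" and cg: "coeff_op \<psi>t g \<in> linf_w w" using coeff_in f g by blast+
    have "coeff_op \<psi>t (\<lambda>x. f x + g x) = (\<lambda>k. coeff_op \<psi>t f k + coeff_op \<psi>t g k)" by (simp add: coeff_op_def)
    then show "Hinf_w_norm w \<psi>t (\<lambda>x. f x + g x) \<le> Hinf_w_norm w \<psi>t f + Hinf_w_norm w \<psi>t g"
      unfolding Hinf_w_norm_def using lw_add(2)[OF cf cg w] by simp
  next
    fix c f assume f: "f \<in> Hinf_w w \<psi>t"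
    obtain fs M1 where f1: "f \<in> Hbar \<psi>t" "\<And>v. v \<in> H00 \<psi>t \<Longrightarrow> (\<lambda>n. cinner (fs n) v) \<longlonglongrightarrow> f v"
      "\<And>n k. cmod (cinner (fs n) (\<psi>t k)) * w k \<le> M1" using HinfE[OF f] by metis
    show "(\<lambda>x. c * f x) \<in> Hinf_w w \<psi>t"
    proof (rule HinfI[where fs="\<lambda>n. scaleC c (fs n)" and M="cmod c * M1"])
      show "(\<lambda>x. c * f x) \<in> Hbar \<psi>t" by (rule Hbar_scale[OF f1(1)])
      show "(\<lambda>n. cinner (scaleC c (fs n)) v) \<longlonglongrightarrow> c * f v" if "v \<in> H00 \<psi>t" for v
        unfolding cinner_scaleC_left by (intro tendsto_intros f1(2) that)
      fix n k
      show "cmod (cinner (scaleC c (fs n)) (\<psi>t k)) * w k \<le> cmod c * M1"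
        using f1(3)[of n k] by (simp add: cinner_scaleC_left norm_mult mult.assoc mult_left_mono)
    qed
    have cf: "coeff_op \<psi>t f \<in> linf_w w" using coeff_in f by blast
    have "coeff_op \<psi>t (\<lambda>x. c * f x) = (\<lambda>k. c * coeff_op \<psi>t f k)" by (simp add: coeff_op_def)
    then show "Hinf_w_norm w \<psi>t (\<lambda>x. c * f x) = cmod c * Hinf_w_norm w \<psi>t f"
      unfolding Hinf_w_norm_def using lw_scale(2)[OF cf w] by simp
  next
    fix f assume f: "f \<in> Hinf_w w \<psi>t"
    have cf: "coeff_op \<psi>t f \<in> linf_w w" using coeff_in f by blast
    show "0 \<le> Hinf_w_norm w \<psi>t f" unfolding Hinf_w_norm_def by (rule lw_nonneg[OF cf w])
    have fb: "f \<in> Hbar \<psi>t" using f unfolding Hinf_w_def by blast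
    show "(Hinf_w_norm w \<psi>t f = 0) = (f = (\<lambda>x. 0))"
    proof
      assume "Hinf_w_norm w \<psi>t f = 0"
      then have "coeff_op \<psi>t f k = 0" for k using lw_eq0[OF cf w] unfolding Hinf_w_norm_def by blast
      then show "f = (\<lambda>x. 0)" by (intro Hbar_eq[OF fb Hbar_0]) (simp add: coeff_op_def)
    next
      assume "f = (\<lambda>x. 0)"
      then show "Hinf_w_norm w \<psi>t f = 0" by (simp add: Hinf_w_norm_def coeff_op_def lw_zero)
    qed
  next
    fix u :: "nat \<Rightarrow> 'a \<Rightarrow> complex" assume H: "(\<forall>n. u n \<in> Hinf_w w \<psi>t) \<and>
      (\<forall>e>0. \<exists>M. \<forall>m\<ge>M. \<forall>n\<ge>M. Hinf_w_norm w \<psi>t (\<lambda>x. u m x - u n x) < e)"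
    then have u: "\<And>n. u n \<in> Hinf_w w \<psi>t" by blast
    define a where "a n = coeff_op \<psi>t (u n)" for n :: nat
    have al: "a n \<in> linf_w w" for n unfolding a_def by (rule coeff_in[OF u])
    have ad: "coeff_op \<psi>t (\<lambda>x. u m x - u n x) = (\<lambda>k. a m k - a n k)" for m n
      by (simp add: a_def coeff_op_def)
    have C: "\<forall>e>0. \<exists>M. \<forall>m\<ge>M. \<forall>n\<ge>M. linf_w_norm w (\<lambda>k. a m k - a n k) < e"
      using H unfolding Hinf_w_norm_def ad by blast
    obtain \<alpha> where a: "\<alpha> \<in> linf_w w" and lim: "(\<lambda>n. linf_w_norm w (\<lambda>k. a n k - \<alpha> k)) \<longlonglongrightarrow> 0"
      using lw_complete[OF w al C] by blast
    have aV: "\<And>n. a n \<in> ?V" using al coeff_fixed[OF w dual gbs u] unfolding a_def by auto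
    have "\<alpha> \<in> ?V" using P1 aV a lim unfolding closed_subspace_linf_w_def by blast
    then obtain \<phi> where ph: "\<phi> \<in> Hinf_w w \<psi>t" "coeff_op \<psi>t \<phi> = \<alpha>"
      using construct[OF w gb, of \<alpha>] by auto
    have e: "coeff_op \<psi>t (\<lambda>x. u n x - \<phi> x) = (\<lambda>k. a n k - \<alpha> k)" for n
      using ph(2) by (auto simp: a_def coeff_op_def)
    have "(\<lambda>n. Hinf_w_norm w \<psi>t (\<lambda>x. u n x - \<phi> x)) \<longlonglongrightarrow> 0"
      unfolding Hinf_w_norm_def e by (rule lim)
    then show "\<exists>f\<in>Hinf_w w \<psi>t. (\<lambda>n. Hinf_w_norm w \<psi>t (\<lambda>x. u n x - f x)) \<longlonglongrightarrow> 0"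
      using ph(1) by blast
  qed
  show ?thesis using P1 P2 P3 by blast
qed

end
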